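(* Let $\boldsymbol{S}\in\mathrm{Mat}(M,M,\mathbb{C})$ be invertible, $\boldsymbol{U}\in\mathrm{Mat}(m,M,\mathbb{C})$, $\boldsymbol{V}\in\mathrm{Mat}(M,m,\mathbb{C})$, let $\boldsymbol{K}\in\mathrm{Mat}(M,M,\mathbb{C})$ be invertible with $\boldsymbol{S}\boldsymbol{K}+\boldsymbol{K}\boldsymbol{S}=\boldsymbol{V}\boldsymbol{U}$, and let $p_0\in\mathrm{Mat}(m,m,\mathbb{C})$. Define the reflected data $$\boldsymbol{S}'=-\boldsymbol{S},\quad \boldsymbol{K}'=-\boldsymbol{K}^{-1},\quad \boldsymbol{V}'=\boldsymbol{K}^{-1}\boldsymbol{V},\quad \boldsymbol{U}'=\boldsymbol{U}\boldsymbol{K}^{-1},\quad p_0'=p_0-\boldsymbol{U}\boldsymbol{K}^{-1}\boldsymbol{V}.$$ Then $\boldsymbol{S}'\boldsymbol{K}'+\boldsymbol{K}'\boldsymbol{S}'=\boldsymbol{V}'\boldsymbol{U}'$, and the pair $(q,p)$ built from $(\boldsymbol{S},\boldsymbol{K},\boldsymbol{U},\boldsymbol{V},p_0)$ by the formulas $$q=\boldsymbol{U}\boldsymbol{\Xi}\,(\boldsymbol{I}_M+(\boldsymbol{K}\boldsymbol{\Xi})^2)^{-1}\boldsymbol{V},\qquad p=p_0-\boldsymbol{U}\boldsymbol{\Xi}\boldsymbol{K}\boldsymbol{\Xi}\,(\boldsymbol{I}_M+(\boldsymbol{K}\boldsymbol{\Xi})^2)^{-1}\boldsymbol{V},\qquad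 \boldsymbol{\Xi}=e^{-\boldsymbol{S}x-\boldsymbol{S}^{-1}y},$$ coincides with the pair $(q',p')$ built by the same formulas from $(\boldsymbol{S}',\boldsymbol{K}',\boldsymbol{U}',\boldsymbol{V}',p_0')$ (with $\boldsymbol{\Xi}'=e^{-\boldsymbol{S}'x-\boldsymbol{S}'^{-1}y}$), at all points where the relevant inverses exist.
   Context: $\boldsymbol{I}_M$ is the $M\times M$ identity matrix and $e^{(\cdot)}$ is the matrix exponential; $x,y$ are real variables. *)

theory Defs
  imports "HOL-Analysis.Analysis"
begin

primrec mat_pow :: "'a::comm_semiring_1^'n^'n \<Rightarrow> nat \<Rightarrow> 'a^'n^'n" where
  "mat_pow A 0 = mat 1"
| "mat_pow A (Suc k) = A ** mat_pow A k"

definition mat_exp :: "complex^'n^'n \<Rightarrow> complex^'n^'n" where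
  "mat_exp A = (\<Sum>k. scaleR (1 / fact k) (mat_pow A k))"

definition Xi :: "complex^'M^'M \<Rightarrow> real \<Rightarrow> real \<Rightarrow> complex^'M^'M" where
  "Xi S x y = mat_exp (- scaleR x S - scaleR y (matrix_inv S))"

definition q_of :: "complex^'M^'M \<Rightarrow> complex^'M^'M \<Rightarrow> complex^'M^'m \<Rightarrow> complex^'m^'M
     \<Rightarrow> real \<Rightarrow> real \<Rightarrow> complex^'m^'m" where
  "q_of S K U V x y =
     (let X = Xi S x y in
      U ** X ** matrix_inv (mat 1 + (K ** X) ** (K ** X)) ** V)"

definition p_of :: "complex^'M^'M \<Rightarrow> complex^'M^'M \<Rightarrow> complex^'M^'m \<Rightarrow> complex^'m^'M
     \<Rightarrow> complex^'m^'m \<Rightarrow> real \<Rightarrow> real \<Rightarrow> complex^'m^'m" where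
  "p_of S K U V p0 x y =
     (let X = Xi S x y in
      p0 - U ** X ** K ** X ** matrix_inv (mat 1 + (K ** X) ** (K ** X)) ** V)"

end

theory Submission
  imports Defs
begin


lemma mm_entry: "(A ** B) $ i $ j = (\<Sum>l\<in>UNIV. A $ i $ l * B $ l $ j)"
  by (simp add: matrix_matrix_mult_def)

lemma mat_entry: "(mat c :: 'a::zero^'n^'n) $ i $ j = (if i = j then c else 0)"
  by (simp add: mat_def)

lemma mat_pow_bound:
  fixes A :: "complex^'n^'n"
  shows "norm (mat_pow A k $ i $ j) \<le> (\<Sum>a\<in>UNIV. \<Sum>b\<in>UNIV. norm (A $ a $ b)) ^ k"
proof (induction k arbitrary: i j)
  case 0 then show ?case by (simp add: mat_entry)
next
  case (Suc k)
  define c where "c = (\<Sum>a\<in>UNIV. \<Sum>b\<in>UNIV. norm (A $ a $ b))"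
  have c0: "0 \<le> c" unfolding c_def by (intro sum_nonneg) auto
  have "norm (mat_pow A (Suc k) $ i $ j) = norm (\<Sum>l\<in>UNIV. A $ i $ l * mat_pow A k $ l $ j)"
    by (simp add: mm_entry)
  also have "\<dots> \<le> (\<Sum>l\<in>UNIV. norm (A $ i $ l) * c ^ k)"
    by (rule order_trans[OF norm_sum], rule sum_mono)
       (use Suc c_def in \<open>auto simp: norm_mult intro: mult_left_mono\<close>)
  also have "\<dots> = (\<Sum>l\<in>UNIV. norm (A $ i $ l)) * c ^ k" by (simp add: sum_distrib_right)
  also have "\<dots> \<le> c * c ^ k"
  proof (rule mult_right_mono)
    show "(\<Sum>l\<in>UNIV. norm (A $ i $ l)) \<le> c" unfolding c_def
      by (rule member_le_sum[where f="\<lambda>a. \<Sum>b\<in>UNIV. norm (A $ a $ b)"]) (auto intro: sum_nonneg)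
  qed (use c0 in auto)
  finally show ?case by (simp add: c_def)
qed

lemma exp_term_summable:
  fixes A :: "complex^'n^'n"
  shows "summable (\<lambda>k. norm ((scaleR (1 / fact k) (mat_pow A k)) $ i $ j))"
proof (rule summable_comparison_test'[OF summable_exp[of "\<Sum>a\<in>UNIV. \<Sum>b\<in>UNIV. norm (A $ a $ b)"]])
  fix n :: nat
  show "norm (norm (scaleR (1 / fact n) (mat_pow A n) $ i $ j))
     \<le> inverse (fact n) * (\<Sum>a\<in>UNIV. \<Sum>b\<in>UNIV. norm (A $ a $ b)) ^ n"
    using mat_pow_bound[of A n i j]
    by (auto simp: divide_inverse norm_mult intro!: mult_left_mono)
qed

lemma sums_entrywise:
  fixes f :: "nat \<Rightarrow> complex^'n^'m"
  assumes "\<And>i j. summable (\<lambda>k. f k $ i $ j)"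
  shows "f sums (\<chi> i j. \<Sum>k. f k $ i $ j)"
  unfolding sums_def
  by (intro vec_tendstoI) (use assms in \<open>simp add: sum_component summable_LIMSEQ\<close>)

lemma mat_exp_entry:
  fixes A :: "complex^'n^'n"
  shows "mat_exp A $ i $ j = (\<Sum>k. (scaleR (1 / fact k) (mat_pow A k)) $ i $ j)"
proof -
  have "(\<lambda>k. scaleR (1 / fact k) (mat_pow A k)) sums (\<chi> i j. \<Sum>k. (scaleR (1 / fact k) (mat_pow A k)) $ i $ j)"
    by (rule sums_entrywise) (use exp_term_summable in \<open>blast intro: summable_norm_cancel\<close>)
  then show ?thesis unfolding mat_exp_def by (simp add: sums_iff)
qed


lemma scaleR_mm_left: "(scaleR r (X::complex^'n^'m)) ** Y = scaleR r (X ** Y)"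
  by (simp add: vec_eq_iff matrix_matrix_mult_def scaleR_sum_right)

lemma scaleR_mm_right: "(X::complex^'n^'m) ** (scaleR r Y) = scaleR r (X ** Y)"
  by (simp add: vec_eq_iff matrix_matrix_mult_def scaleR_sum_right)

lemma neg_mm_left: "(- (X::complex^'n^'m)) ** Y = - (X ** Y)"
  by (simp add: vec_eq_iff matrix_matrix_mult_def sum_negf)

lemma mat_pow_add: "mat_pow (A::complex^'n^'n) k ** mat_pow A m = mat_pow A (k + m)"
  by (induction k) (simp_all add: matrix_mul_assoc[symmetric])

lemma mat_pow_neg: "mat_pow (- (A::complex^'n^'n)) m = scaleR ((-1)^m) (mat_pow A m)"
  by (induction m) (simp_all add: neg_mm_left scaleR_mm_right)

lemma alt_fact_sum:
  "(\<Sum>k\<le>n. (-1)^(n-k) / (fact k * fact (n-k)) :: real) = (if n = 0 then 1 else 0)"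
proof -
  have "(\<Sum>k\<le>n. (-1)^(n-k) / (fact k * fact (n-k)) :: real)
      = (\<Sum>k\<le>n. of_nat (n choose k) * 1^k * (-1)^(n-k)) / fact n"
    by (simp add: sum_divide_distrib binomial_fact)
  also have "\<dots> = (1 + (-1::real))^n / fact n" by (simp only: binomial_ring)
  finally show ?thesis by simp
qed

lemma cauchy_term:
  fixes A :: "complex^'n^'n"
  shows "(\<Sum>k\<le>n. scaleR (1 / fact k) (mat_pow A k) ** scaleR (1 / fact (n-k)) (mat_pow (-A) (n-k)))
       = (if n = 0 then mat 1 else 0)"
proof -
  have "(\<Sum>k\<le>n. scaleR (1 / fact k) (mat_pow A k) ** scaleR (1 / fact (n-k)) (mat_pow (-A) (n-k)))
      = (\<Sum>k\<le>n. scaleR ((-1)^(n-k) / (fact k * fact (n-k))) (mat_pow A n))"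
    by (rule sum.cong) (auto simp: scaleR_mm_left scaleR_mm_right mat_pow_neg mat_pow_add)
  also have "\<dots> = scaleR (\<Sum>k\<le>n. (-1)^(n-k) / (fact k * fact (n-k))) (mat_pow A n)"
    by (simp add: scaleR_sum_left)
  also have "\<dots> = (if n = 0 then mat 1 else 0)" by (simp add: alt_fact_sum)
  finally show ?thesis .
qed

lemma mat_exp_minus: "mat_exp (A::complex^'n^'n) ** mat_exp (- A) = mat 1"
proof -
  define a where "a = (\<lambda>k. scaleR (1 / fact k) (mat_pow A k))"
  define b where "b = (\<lambda>k. scaleR (1 / fact k) (mat_pow (-A) k))"
  have ea: "mat_exp A $ i $ j = (\<Sum>k. a k $ i $ j)" for i j unfolding a_def by (rule mat_exp_entry)
  have eb: "mat_exp (-A) $ i $ j = (\<Sum>k. b k $ i $ j)" for i j unfolding b_def by (rule mat_exp_entry)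
  have sa: "summable (\<lambda>k. norm (a k $ i $ j))" for i j unfolding a_def by (rule exp_term_summable)
  have sb: "summable (\<lambda>k. norm (b k $ i $ j))" for i j unfolding b_def by (rule exp_term_summable)
  have ct: "(\<Sum>k\<le>n. a k ** b (n-k)) = (if n = 0 then mat 1 else 0)" for n
    unfolding a_def b_def by (rule cauchy_term)
  show ?thesis
  proof (simp add: vec_eq_iff, intro allI)
    fix i j
    have "(mat_exp A ** mat_exp (-A)) $ i $ j = (\<Sum>l\<in>UNIV. (\<Sum>k. a k $ i $ l) * (\<Sum>k. b k $ l $ j))"
      by (simp add: mm_entry ea eb)
    also have "\<dots> = (\<Sum>l\<in>UNIV. \<Sum>n. \<Sum>k\<le>n. a k $ i $ l * b (n-k) $ l $ j)"
      by (rule sum.cong[OF refl], rule Cauchy_product[OF sa sb])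
    also have "\<dots> = (\<Sum>n. \<Sum>l\<in>UNIV. \<Sum>k\<le>n. a k $ i $ l * b (n-k) $ l $ j)"
      by (rule suminf_sum[symmetric], rule summable_Cauchy_product[OF sa sb])
    also have "\<dots> = (\<Sum>n. (\<Sum>k\<le>n. a k ** b (n-k)) $ i $ j)"
      by (simp add: mm_entry sum_component sum.swap[of _ UNIV])
    also have "\<dots> = (\<Sum>n. if n = 0 then mat 1 $ i $ j else 0)"
      by (rule suminf_cong) (simp add: ct)
    also have "\<dots> = mat 1 $ i $ j"
      using sums_single[of 0 "\<lambda>_. mat 1 $ i $ j"] by (rule sums_unique[symmetric])
    finally show "(mat_exp A ** mat_exp (-A)) $ i $ j = mat 1 $ i $ j" .
  qed
qed


lemma mm_rdistrib: "((A::complex^'n^'m) + B) ** C = A ** C + B ** C"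
  by (simp add: vec_eq_iff matrix_matrix_mult_def sum.distrib distrib_right)

lemma mm_ldiff: "(A::complex^'n^'m) ** (B - C) = A ** B - A ** C"
  by (simp add: vec_eq_iff matrix_matrix_mult_def sum_subtractf right_diff_distrib)

lemma mm_rdiff: "((A::complex^'n^'m) - B) ** C = A ** C - B ** C"
  by (simp add: vec_eq_iff matrix_matrix_mult_def sum_subtractf left_diff_distrib)

lemma neg_mm_right: "(X::complex^'n^'m) ** (- Y) = - (X ** Y)"
  by (simp add: vec_eq_iff matrix_matrix_mult_def sum_negf)

lemma inv_props:
  assumes "invertible (A::complex^'n^'n)"
  shows "A ** matrix_inv A = mat 1" "matrix_inv A ** A = mat 1"
  using someI_ex[OF assms[unfolded invertible_def]] unfolding matrix_inv_def by auto

lemma inv_unique: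
  assumes "(A::complex^'n^'n) ** B = mat 1" "B ** A = mat 1"
  shows "matrix_inv A = B"
proof -
  have i: "invertible A" using assms unfolding invertible_def by blast
  have "matrix_inv A = matrix_inv A ** (A ** B)" using assms by simp
  also have "\<dots> = B" by (simp add: matrix_mul_assoc inv_props[OF i])
  finally show ?thesis .
qed

lemma cancel_gen: "(A::complex^'n^'n) ** B = mat 1 \<Longrightarrow> (Z::complex^'n^'m) ** A ** B = Z"
  by (metis matrix_mul_assoc matrix_mul_rid)

theorem mainTheorem3:
  fixes S K :: "complex^'M^'M" and U :: "complex^'M^'m" and V :: "complex^'m^'M"
    and p0 :: "complex^'m^'m"
  assumes "invertible S" and "invertible K"
    and "S ** K + K ** S = V ** U"
  shows "(- S) ** (- matrix_inv K) + (- matrix_inv K) ** (- S)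
           = (matrix_inv K ** V) ** (U ** matrix_inv K)
       \<and> (\<forall>x y.
            invertible (mat 1 + (K ** Xi S x y) ** (K ** Xi S x y))
          \<and> invertible (mat 1 + ((- matrix_inv K) ** Xi (- S) x y) ** ((- matrix_inv K) ** Xi (- S) x y))
          \<longrightarrow> q_of S K U V x y = q_of (- S) (- matrix_inv K) (U ** matrix_inv K) (matrix_inv K ** V) x y
            \<and> p_of S K U V p0 x y
              = p_of (- S) (- matrix_inv K) (U ** matrix_inv K) (matrix_inv K ** V)
                     (p0 - U ** matrix_inv K ** V) x y)"
proof -
  define Ki where "Ki = matrix_inv K"
  define Si where "Si = matrix_inv S"
  have KKi: "K ** Ki = mat 1" and KiK: "Ki ** K = mat 1"
    using inv_props[OF assms(2)] by (auto simp: Ki_def)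
  have SSi: "S ** Si = mat 1" and SiS: "Si ** S = mat 1"
    using inv_props[OF assms(1)] by (auto simp: Si_def)
  have part1: "(- S) ** (- Ki) + (- Ki) ** (- S) = (Ki ** V) ** (U ** Ki)"
  proof -
    have "(Ki ** V) ** (U ** Ki) = Ki ** (V ** U) ** Ki" by (simp add: matrix_mul_assoc)
    also have "\<dots> = Ki ** S ** K ** Ki + Ki ** K ** S ** Ki"
      by (simp add: assms(3)[symmetric] matrix_add_ldistrib mm_rdistrib matrix_mul_assoc)
    also have "\<dots> = S ** Ki + Ki ** S"
      by (simp add: cancel_gen[OF KKi] KiK add.commute)
    finally show ?thesis by (simp add: neg_mm_left neg_mm_right)
  qed
  have invnegS: "matrix_inv (- S) = - Si"
    by (rule inv_unique) (simp_all add: neg_mm_left neg_mm_right SSi SiS)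
  have part2: "q_of S K U V x y = q_of (- S) (- Ki) (U ** Ki) (Ki ** V) x y
            \<and> p_of S K U V p0 x y
              = p_of (- S) (- Ki) (U ** Ki) (Ki ** V) (p0 - U ** Ki ** V) x y"
    if hP: "invertible (mat 1 + (K ** Xi S x y) ** (K ** Xi S x y))"
    and hP': "invertible (mat 1 + ((- Ki) ** Xi (- S) x y) ** ((- Ki) ** Xi (- S) x y))"
    for x y
  proof -
    define X where "X = Xi S x y"
    define Y where "Y = Xi (- S) x y"
    have Ydef: "Y = mat_exp (- (- scaleR x S - scaleR y Si))"
      unfolding Y_def Xi_def invnegS by (simp add: Si_def algebra_simps)
    have XY: "X ** Y = mat 1" unfolding X_def Ydef Xi_def Si_def by (rule mat_exp_minus)
    have YX: "Y ** X = mat 1" unfolding X_def Ydef Xi_def Si_def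
      using mat_exp_minus[of "- (- scaleR x S - scaleR y (matrix_inv S))"] by (simp add: algebra_simps)
    define P where "P = mat 1 + (K ** X) ** (K ** X)"
    define P' where "P' = mat 1 + ((- Ki) ** Y) ** ((- Ki) ** Y)"
    define M where "M = matrix_inv P"
    define M' where "M' = matrix_inv P'"
    have PM: "P ** M = mat 1" "M ** P = mat 1"
      using inv_props[OF hP[folded X_def]] by (auto simp: M_def P_def)
    have PM': "P' ** M' = mat 1" "M' ** P' = mat 1"
      using inv_props[OF hP'[folded Y_def]] by (auto simp: M'_def P'_def)
    note canc = cancel_gen[OF KKi] cancel_gen[OF KiK] cancel_gen[OF XY] cancel_gen[OF YX]
      cancel_gen[OF PM(1)] cancel_gen[OF PM(2)] cancel_gen[OF PM'(1)] cancel_gen[OF PM'(2)]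
      KKi KiK XY YX PM PM'
    have s1: "Ki ** P = P' ** X ** K ** X"
      unfolding P_def P'_def
      by (simp add: matrix_add_ldistrib mm_rdistrib neg_mm_left neg_mm_right matrix_mul_assoc canc)
    have s2: "M' ** Ki ** P = X ** K ** X"
      by (metis s1 matrix_mul_assoc canc(8) matrix_mul_lid)
    have s3: "Ki ** Y ** M' ** Ki = X ** M"
    proof -
      have "Ki ** Y ** M' ** Ki = Ki ** Y ** (M' ** Ki ** P) ** M"
        by (simp add: matrix_mul_assoc canc)
      also have "\<dots> = X ** M" by (simp add: s2 matrix_mul_assoc canc)
      finally show ?thesis .
    qed
    have s3': "Z ** Ki ** Y ** M' ** Ki = Z ** X ** M" for Z :: "complex^'M^'m"
      by (metis s3 matrix_mul_assoc)
    have s4: "Ki ** M + X ** K ** X ** M = Ki"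
    proof -
      have "Ki = Ki ** P ** M" by (simp add: canc)
      also have "\<dots> = Ki ** M + X ** K ** X ** M"
        unfolding P_def by (simp add: matrix_add_ldistrib mm_rdistrib matrix_mul_assoc canc)
      finally show ?thesis by simp
    qed
    have s4': "Z ** Ki ** M ** V + Z ** X ** K ** X ** M ** V = Z ** Ki ** V" for Z :: "complex^'M^'m"
      by (metis s4 matrix_mul_assoc matrix_add_ldistrib mm_rdistrib)
    have q: "q_of S K U V x y = q_of (- S) (- Ki) (U ** Ki) (Ki ** V) x y"
      unfolding q_of_def Let_def X_def[symmetric] Y_def[symmetric] Ki_def[symmetric]
        P_def[symmetric] P'_def[symmetric] M_def[symmetric] M'_def[symmetric]
      using s3'[of U] by (simp add: matrix_mul_assoc)
    have p: "p_of S K U V p0 x y = p_of (- S) (- Ki) (U ** Ki) (Ki ** V) (p0 - U ** Ki ** V) x y"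
    proof -
      have e1: "U ** Ki ** Y ** Ki ** Y ** M' ** Ki ** V = U ** Ki ** M ** V"
        using s3'[of "U ** Ki ** Y"] by (simp add: matrix_mul_assoc canc)
      show ?thesis
        unfolding p_of_def Let_def X_def[symmetric] Y_def[symmetric] Ki_def[symmetric]
          P_def[symmetric] P'_def[symmetric] M_def[symmetric] M'_def[symmetric]
        using e1 s4'[of U]
        by (simp add: matrix_mul_assoc neg_mm_left neg_mm_right algebra_simps)
    qed
    show ?thesis using p q by simp
  qed
  show ?thesis using part1 part2 unfolding Ki_def by blast
qed

end
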